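(* Let $p,q,r\in(0,1)$ with $p+q+r=1$. Let $X_1,\eta_2,\eta_3,\ldots$ be independent random variables, each taking the values $1,-1,0$ with probabilities $p,q,r$ respectively. Set $X_{n+1}=\eta_{n+1}X_1$ for $n\ge1$ and $S_n=\sum_{k=1}^nX_k$. Then, as $n\to\infty$, $S_n/n$ converges in distribution to a random variable taking the value $p-q$ with probability $p$, the value $0$ with probability $r$, and the value $-(p-q)$ with probability $q$. Moreover, $E(S_n/n)\to(p-q)^2$ and $\operatorname{Var}(S_n/n)\to(p-q)^2\big(p+q-(p-q)^2\big)$ as $n\to\infty$.
   Context: This is the elephant random walk with delays in which the elephant remembers only the first step: each later step repeats the first step with probability $p$, reverses it with probability $q$, or equals $0$ with probability $r$. *)

theory Defs
  imports "HOL-Probability.Probability"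
begin

definition erw_step :: "('a \<Rightarrow> real) \<Rightarrow> (nat \<Rightarrow> 'a \<Rightarrow> real) \<Rightarrow> nat \<Rightarrow> 'a \<Rightarrow> real" where
  "erw_step X1 \<eta> n = (if n = 1 then X1 else (\<lambda>\<omega>. \<eta> n \<omega> * X1 \<omega>))"

definition erw_sum :: "('a \<Rightarrow> real) \<Rightarrow> (nat \<Rightarrow> 'a \<Rightarrow> real) \<Rightarrow> nat \<Rightarrow> 'a \<Rightarrow> real" where
  "erw_sum X1 \<eta> n = (\<lambda>\<omega>. \<Sum>k=1..n. erw_step X1 \<eta> k \<omega>)"

definition erw_limit_law :: "real \<Rightarrow> real \<Rightarrow> real \<Rightarrow> real measure" where
  "erw_limit_law p q r =
     distr (measure_pmf (pmf_of_list [(p - q, p), (0, r), (-(p - q), q)])) borel (\<lambda>x. x)"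

end

theory Submission
  imports Defs
begin

lemma erw_sum_eq:
  assumes "n \<ge> 1"
  shows "erw_sum X1 \<eta> n \<omega> = X1 \<omega> + (\<Sum>k=2..n. X1 \<omega> * \<eta> k \<omega>)"
proof -
  have "erw_sum X1 \<eta> n \<omega> = erw_step X1 \<eta> 1 \<omega> + (\<Sum>k=Suc 1..n. erw_step X1 \<eta> k \<omega>)"
    unfolding erw_sum_def using assms by (simp add: sum.atLeast_Suc_atMost)
  also have "(\<Sum>k=Suc 1..n. erw_step X1 \<eta> k \<omega>) = (\<Sum>k=2..n. X1 \<omega> * \<eta> k \<omega>)"
    by (rule sum.cong) (auto simp: erw_step_def)
  finally show ?thesis by (simp add: erw_step_def)
qed

lemma sum_if_eq:
  fixes A B :: real
  assumes "finite K" "j \<in> K"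
  shows "(\<Sum>k\<in>K. if j = k then A else B) = A + (real (card K) - 1) * B"
proof -
  have "(\<Sum>k\<in>K. if j = k then A else B) = (\<Sum>k\<in>K. B + (if j = k then A - B else 0))"
    by (rule sum.cong) auto
  also have "\<dots> = real (card K) * B + (A - B)"
    using assms by (simp add: sum.distrib)
  finally show ?thesis by (simp add: algebra_simps)
qed

lemma lim_quad:
  fixes a b c :: real
  assumes "eventually (\<lambda>n. f n = (a * real n ^ 2 + b * real n + c) / real n ^ 2) sequentially"
  shows "f \<longlonglongrightarrow> a"
proof -
  have "(\<lambda>n. a + b * (1 / real n) + c * (1 / real n) * (1/real n)) \<longlonglongrightarrow> a + b * 0 + c * 0 * 0"
    by (intro tendsto_intros lim_inverse_n')
  moreover have "eventually (\<lambda>n. a + b * (1 / real n) + c * (1 / real n) * (1/real n) = f n) sequentially"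
    using eventually_gt_at_top[of 0] assms
    by eventually_elim (simp add: field_simps power2_eq_square)
  ultimately show ?thesis by (simp add: Lim_transform_eventually)
qed

lemma gap_aux1:
  fixes \<delta> z x a :: real
  shows "\<delta> \<le> \<bar>z - x\<bar> \<Longrightarrow> a \<le> x \<Longrightarrow> \<not> z \<le> x \<Longrightarrow> \<delta> \<le> \<bar>a - z\<bar>"
  by (simp add: abs_if split: if_splits)

lemma gap_aux2:
  fixes \<delta> z x a :: real
  shows "\<delta> \<le> \<bar>z - x\<bar> \<Longrightarrow> z \<le> x \<Longrightarrow> \<not> a \<le> x \<Longrightarrow> \<delta> \<le> \<bar>a - z\<bar>"
  by (simp add: abs_if split: if_splits)

lemma abs_mult_le1: "\<bar>x\<bar> \<le> 1 \<Longrightarrow> \<bar>y\<bar> \<le> 1 \<Longrightarrow> \<bar>x * y\<bar> \<le> (1::real)"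
  by (simp add: abs_mult mult_le_one)

context prob_space
begin

lemma ev_eq:
  assumes V: "V \<in> borel_measurable M"
  shows "{\<omega>\<in>space M. V \<omega> = (c::real)} \<in> events"
proof -
  have "{\<omega>\<in>space M. V \<omega> = c} = V -` {c} \<inter> space M" by auto
  also have "\<dots> \<in> events" by (rule measurable_sets[OF V]) auto
  finally show ?thesis .
qed

lemma ev_le:
  assumes V: "V \<in> borel_measurable M"
  shows "{\<omega>\<in>space M. V \<omega> \<le> (c::real)} \<in> events"
proof -
  have "{\<omega>\<in>space M. V \<omega> \<le> c} = V -` {..c} \<inter> space M" by auto
  also have "\<dots> \<in> events" by (rule measurable_sets[OF V]) auto
  finally show ?thesis .
qed

lemma ae_three_vals:
  fixes V :: "'a \<Rightarrow> real"
  assumes V: "V \<in> borel_measurable M"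
    and "prob {\<omega>\<in>space M. V \<omega> = 1} = p" "prob {\<omega>\<in>space M. V \<omega> = -1} = q"
    "prob {\<omega>\<in>space M. V \<omega> = 0} = r" "p + q + r = 1"
  shows "AE \<omega> in M. V \<omega> = 1 \<or> V \<omega> = -1 \<or> V \<omega> = 0"
proof -
  note V[measurable]
  let ?A = "{\<omega>\<in>space M. V \<omega> = 1}" and ?B = "{\<omega>\<in>space M. V \<omega> = -1}"
    and ?C = "{\<omega>\<in>space M. V \<omega> = 0}"
  have ev: "?A \<in> events" "?B \<in> events" "?C \<in> events" using ev_eq[OF V] by auto
  have "prob (?A \<union> ?B \<union> ?C) = prob ?A + prob ?B + prob ?C"
    using ev by (subst finite_measure_Union, auto)+
  also have "\<dots> = 1" using assms by simp
  finally have "AE \<omega> in M. \<omega> \<in> ?A \<union> ?B \<union> ?C" by (rule AE_prob_1)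
  then show ?thesis by eventually_elim auto
qed

lemma moment3:
  fixes V :: "'a \<Rightarrow> real"
  assumes V: "V \<in> borel_measurable M"
    and ae: "AE \<omega> in M. V \<omega> = 1 \<or> V \<omega> = -1 \<or> V \<omega> = 0"
    and "prob {\<omega>\<in>space M. V \<omega> = 1} = p" "prob {\<omega>\<in>space M. V \<omega> = -1} = q"
    and a: "a \<ge> 1"
  shows "expectation (\<lambda>\<omega>. V \<omega> ^ a) = p + (-1)^a * q"
proof -
  note V[measurable]
  let ?A = "{\<omega>\<in>space M. V \<omega> = 1}" and ?B = "{\<omega>\<in>space M. V \<omega> = -1}"
  have ev: "?A \<in> events" "?B \<in> events" using ev_eq[OF V] by auto
  have "expectation (\<lambda>\<omega>. V \<omega> ^ a) = expectation (\<lambda>\<omega>. indicator ?A \<omega> + (-1)^a * indicator ?B \<omega>)"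
  proof (rule integral_cong_AE)
    show "AE \<omega> in M. V \<omega> ^ a = indicator ?A \<omega> + (-1)^a * indicator ?B \<omega>"
      using ae AE_space by eventually_elim (use a in \<open>auto simp: indicator_def\<close>)
  qed (use ev in auto)
  also have "\<dots> = prob ?A + (-1)^a * prob ?B"
  proof -
    have i1: "integrable M (indicat_real ?A)" "integrable M (indicat_real ?B)"
      using ev by (auto intro!: integrable_real_indicator simp: emeasure_finite less_top[symmetric])
    have "expectation (\<lambda>\<omega>. indicator ?A \<omega> + (-1)^a * indicator ?B \<omega>) =
      expectation (indicat_real ?A) + expectation (\<lambda>\<omega>. (-1)^a * indicat_real ?B \<omega>)"
      using i1 by (subst Bochner_Integration.integral_add) auto
    also have "\<dots> = expectation (indicat_real ?A) + (-1)^a * expectation (indicat_real ?B)"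
      by simp
    also have "\<dots> = prob ?A + (-1)^a * prob ?B"
      using ev by (simp add: integral_indicator Int_absorb2 sets.sets_into_space)
    finally show ?thesis .
  qed
  finally show ?thesis using assms by simp
qed


lemma prob_split3:
  fixes V :: "'a \<Rightarrow> real"
  assumes V: "V \<in> borel_measurable M" and ae: "AE \<omega> in M. V \<omega> = 1 \<or> V \<omega> = -1 \<or> V \<omega> = 0"
    and E: "E \<in> events"
  shows "prob E = prob (E \<inter> {\<omega>\<in>space M. V \<omega> = 1}) + prob (E \<inter> {\<omega>\<in>space M. V \<omega> = -1})
    + prob (E \<inter> {\<omega>\<in>space M. V \<omega> = 0})"
proof -
  let ?A = "{\<omega>\<in>space M. V \<omega> = 1}" and ?B = "{\<omega>\<in>space M. V \<omega> = -1}"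
    and ?C = "{\<omega>\<in>space M. V \<omega> = 0}"
  have ev: "?A \<in> events" "?B \<in> events" "?C \<in> events" using ev_eq[OF V] by auto
  have "prob E = prob (E \<inter> ?A \<union> E \<inter> ?B \<union> E \<inter> ?C)"
  proof (rule finite_measure_eq_AE)
    show "AE x in M. (x \<in> E) = (x \<in> E \<inter> ?A \<union> E \<inter> ?B \<union> E \<inter> ?C)"
      using ae AE_space by eventually_elim auto
  qed (use E ev in auto)
  also have "\<dots> = prob (E \<inter> ?A) + prob (E \<inter> ?B) + prob (E \<inter> ?C)"
    using E ev by (subst finite_measure_Union, auto)+
  finally show ?thesis .
qed

lemma indep3:
  assumes ind: "indep_vars (\<lambda>_. borel) Y I" and ijk: "i\<in>I" "j\<in>I" "k\<in>I" "i\<noteq>j" "i\<noteq>k" "j\<noteq>k"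
   and bnd: "\<And>l. l \<in> I \<Longrightarrow> AE \<omega> in M. \<bar>Y l \<omega>\<bar> \<le> (1::real)"
  shows "expectation (\<lambda>\<omega>. Y i \<omega> ^ a * Y j \<omega> ^ b * Y k \<omega> ^ c) =
    expectation (\<lambda>\<omega>. Y i \<omega> ^ a) * expectation (\<lambda>\<omega>. Y j \<omega> ^ b) * expectation (\<lambda>\<omega>. Y k \<omega> ^ c)"
proof -
  define e where "e l = (if l = i then a else if l = j then b else c)" for l
  have meas: "\<And>l. l\<in>I \<Longrightarrow> Y l \<in> borel_measurable M"
    using ind unfolding indep_vars_def2 by auto
  have ind2: "indep_vars (\<lambda>_. borel) (\<lambda>l \<omega>. Y l \<omega> ^ e l) {i,j,k}"
    by (rule indep_vars_subset[OF indep_vars_compose2[OF ind]]) (use ijk in auto)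
  have int: "integrable M (\<lambda>\<omega>. Y l \<omega> ^ e l)" if "l\<in>{i,j,k}" for l
  proof (rule integrable_const_bound[where B=1])
    have "l \<in> I" using that ijk by auto
    show "AE \<omega> in M. norm (Y l \<omega> ^ e l) \<le> 1"
      using bnd[OF \<open>l\<in>I\<close>] by eventually_elim (simp add: power_abs power_le_one)
    show "(\<lambda>\<omega>. Y l \<omega> ^ e l) \<in> borel_measurable M" using meas[OF \<open>l\<in>I\<close>] by measurable
  qed
  have "expectation (\<lambda>\<omega>. \<Prod>l\<in>{i,j,k}. Y l \<omega> ^ e l) = (\<Prod>l\<in>{i,j,k}. expectation (\<lambda>\<omega>. Y l \<omega> ^ e l))"
    by (rule indep_vars_lebesgue_integral[OF _ ind2 int]) auto
  then show ?thesis using ijk by (simp add: e_def mult.assoc)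
qed

end

theorem theorem5p2:
  fixes M :: "'a measure" and X1 :: "'a \<Rightarrow> real" and \<eta> :: "nat \<Rightarrow> 'a \<Rightarrow> real"
    and p q r :: real
  assumes "prob_space M"
    and "p \<in> {0<..<1}" and "q \<in> {0<..<1}" and "r \<in> {0<..<1}" and "p + q + r = 1"
    and "prob_space.indep_vars M (\<lambda>_. borel) (\<lambda>i. if i = 1 then X1 else \<eta> i) {1..}"
    and "measure M {\<omega> \<in> space M. X1 \<omega> = 1} = p"
    and "measure M {\<omega> \<in> space M. X1 \<omega> = -1} = q"
    and "measure M {\<omega> \<in> space M. X1 \<omega> = 0} = r"
    and "\<And>n. n \<ge> 2 \<Longrightarrow> measure M {\<omega> \<in> space M. \<eta> n \<omega> = 1} = p"
    and "\<And>n. n \<ge> 2 \<Longrightarrow> measure M {\<omega> \<in> space M. \<eta> n \<omega> = -1} = q"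
    and "\<And>n. n \<ge> 2 \<Longrightarrow> measure M {\<omega> \<in> space M. \<eta> n \<omega> = 0} = r"
  shows "weak_conv_m (\<lambda>n. distr M borel (\<lambda>\<omega>. erw_sum X1 \<eta> n \<omega> / real n)) (erw_limit_law p q r)
    \<and> (\<lambda>n. prob_space.expectation M (\<lambda>\<omega>. erw_sum X1 \<eta> n \<omega> / real n)) \<longlonglongrightarrow> (p - q)^2
    \<and> (\<lambda>n. prob_space.variance M (\<lambda>\<omega>. erw_sum X1 \<eta> n \<omega> / real n))
           \<longlonglongrightarrow> (p - q)^2 * (p + q - (p - q)^2)"
proof -
  interpret prob_space M by fact
  define Y where "Y = (\<lambda>i. if i = (1::nat) then X1 else \<eta> i)"
  have ind: "indep_vars (\<lambda>_. borel) Y {1..}" using assms(6) unfolding Y_def .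
  have measY: "\<And>l. l \<in> {1..} \<Longrightarrow> Y l \<in> borel_measurable M"
    using ind unfolding indep_vars_def2 by auto
  have mX: "X1 \<in> borel_measurable M" using measY[of 1] by (simp add: Y_def)
  have me: "\<eta> k \<in> borel_measurable M" if "k \<ge> 2" for k
    using measY[of k] that by (simp add: Y_def)
  have aeX: "AE \<omega> in M. X1 \<omega> = 1 \<or> X1 \<omega> = -1 \<or> X1 \<omega> = 0"
    by (rule ae_three_vals[OF mX assms(7,8,9,5)])
  have aee: "AE \<omega> in M. \<eta> k \<omega> = 1 \<or> \<eta> k \<omega> = -1 \<or> \<eta> k \<omega> = 0" if "k \<ge> 2" for k
    by (rule ae_three_vals[OF me[OF that] assms(10,11,12)[OF that] assms(5)])
  have bX: "AE \<omega> in M. \<bar>X1 \<omega>\<bar> \<le> 1" using aeX by eventually_elim auto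
  have be: "AE \<omega> in M. \<bar>\<eta> k \<omega>\<bar> \<le> 1" if "k \<ge> 2" for k
    using aee[OF that] by eventually_elim auto
  have bY: "AE \<omega> in M. \<bar>Y l \<omega>\<bar> \<le> 1" if "l \<in> {1..}" for l
    using bX be[of l] that by (cases "l = 1") (auto simp: Y_def)
  have EX1: "expectation X1 = p - q"
    using moment3[OF mX aeX assms(7,8), of 1] by simp
  have EX2: "expectation (\<lambda>\<omega>. X1 \<omega> ^ 2) = p + q"
    using moment3[OF mX aeX assms(7,8), of 2] by simp
  have Ee1: "expectation (\<eta> k) = p - q" if "k \<ge> 2" for k
    using moment3[OF me[OF that] aee[OF that] assms(10,11)[OF that], of 1] by simp
  have Ee2: "expectation (\<lambda>\<omega>. \<eta> k \<omega> ^ 2) = p + q" if "k \<ge> 2" for k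
    using moment3[OF me[OF that] aee[OF that] assms(10,11)[OF that], of 2] by simp
  have E3: "expectation (\<lambda>\<omega>. X1 \<omega> ^ a * \<eta> j \<omega> ^ b * \<eta> k \<omega> ^ c) =
      expectation (\<lambda>\<omega>. X1 \<omega> ^ a) * expectation (\<lambda>\<omega>. \<eta> j \<omega> ^ b) * expectation (\<lambda>\<omega>. \<eta> k \<omega> ^ c)"
    if "j \<ge> 2" "k \<ge> 2" "j \<noteq> k" for a b c j k
    using indep3[OF ind, of 1 j k a b c] bY that by (simp add: Y_def)
  have E_Xe: "expectation (\<lambda>\<omega>. X1 \<omega> * \<eta> k \<omega>) = (p - q)^2" if "k \<ge> 2" for k
    using E3[of k "Suc k" 1 1 0] that EX1 Ee1[OF that] by (simp add: power2_eq_square prob_space)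
  have E_X2e: "expectation (\<lambda>\<omega>. X1 \<omega> ^ 2 * \<eta> k \<omega>) = (p + q) * (p - q)" if "k \<ge> 2" for k
    using E3[of k "Suc k" 2 1 0] that EX2 Ee1[OF that] by (simp add: prob_space)
  have E_X2ee: "expectation (\<lambda>\<omega>. X1 \<omega> ^ 2 * \<eta> j \<omega> * \<eta> k \<omega>) =
      (if j = k then (p + q)^2 else (p + q) * (p - q)^2)" if "j \<ge> 2" "k \<ge> 2" for j k
  proof (cases "j = k")
    case True
    have "expectation (\<lambda>\<omega>. X1 \<omega> ^ 2 * \<eta> j \<omega> * \<eta> k \<omega>) =
        expectation (\<lambda>\<omega>. X1 \<omega> ^ 2 * \<eta> j \<omega> ^ 2 * \<eta> (Suc j) \<omega> ^ 0)"
      using True by (simp add: power2_eq_square mult.assoc)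
    also have "\<dots> = (p + q)^2"
      using E3[of j "Suc j" 2 2 0] that EX2 Ee2[OF that(1)] by (simp add: power2_eq_square prob_space)
    finally show ?thesis using True by simp
  next
    case False
    have "expectation (\<lambda>\<omega>. X1 \<omega> ^ 2 * \<eta> j \<omega> * \<eta> k \<omega>) =
        expectation (\<lambda>\<omega>. X1 \<omega> ^ 2 * \<eta> j \<omega> ^ 1 * \<eta> k \<omega> ^ 1)"
      by simp
    also have "\<dots> = (p + q) * (p - q)^2"
      using E3[of j k 2 1 1] that False EX2 Ee1[OF that(1)] Ee1[OF that(2)] by (simp add: power2_eq_square prob_space)
    finally show ?thesis using False by simp
  qed
  have iX: "integrable M X1"
    by (rule integrable_const_bound[where B=1]) (use bX mX in auto)
  have iX2: "integrable M (\<lambda>\<omega>. X1 \<omega> ^ 2)"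
    by (rule integrable_const_bound[where B=1])
       (use bX mX in \<open>auto elim!: eventually_mono simp: power_abs abs_square_le_1\<close>)
  have iXe: "integrable M (\<lambda>\<omega>. X1 \<omega> * \<eta> k \<omega>)" if "k \<ge> 2" for k
  proof (rule integrable_const_bound[where B=1])
    show "AE \<omega> in M. norm (X1 \<omega> * \<eta> k \<omega>) \<le> 1"
      using bX be[OF that] by eventually_elim (simp add: abs_mult mult_le_one)
  qed (use mX me[OF that] in auto)
  have iX2e: "integrable M (\<lambda>\<omega>. X1 \<omega> ^ 2 * \<eta> k \<omega>)" if "k \<ge> 2" for k
  proof (rule integrable_const_bound[where B=1])
    show "AE \<omega> in M. norm (X1 \<omega> ^ 2 * \<eta> k \<omega>) \<le> 1"
      using bX be[OF that] by eventually_elim (simp add: abs_mult mult_le_one power_abs abs_square_le_1)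
  qed (use mX me[OF that] in auto)
  have iX2ee: "integrable M (\<lambda>\<omega>. X1 \<omega> ^ 2 * \<eta> j \<omega> * \<eta> k \<omega>)" if "j \<ge> 2" "k \<ge> 2" for j k
  proof (rule integrable_const_bound[where B=1])
    show "AE \<omega> in M. norm (X1 \<omega> ^ 2 * \<eta> j \<omega> * \<eta> k \<omega>) \<le> 1"
      using bX be[OF that(1)] be[OF that(2)]
      by eventually_elim (simp add: abs_mult mult_le_one power_abs abs_square_le_1)
  qed (use mX me[OF that(1)] me[OF that(2)] in auto)
  have mS: "erw_sum X1 \<eta> n \<in> borel_measurable M" for n
  proof -
    have "(\<lambda>\<omega>. \<Sum>k=1..n. erw_step X1 \<eta> k \<omega>) \<in> borel_measurable M"
    proof (rule borel_measurable_sum)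
      fix k assume "k \<in> {1..n}"
      then show "erw_step X1 \<eta> k \<in> borel_measurable M"
        using mX me[of k] by (cases "k = 1") (auto simp: erw_step_def)
    qed
    then show ?thesis unfolding erw_sum_def by simp
  qed
  have eqS: "erw_sum X1 \<eta> n = (\<lambda>\<omega>. X1 \<omega> + (\<Sum>k\<in>{2..n}. X1 \<omega> * \<eta> k \<omega>))" if "n \<ge> 1" for n
    by (intro ext) (rule erw_sum_eq[OF that])
  have cardK: "real (card {2..n}) = real n - 1" if "n \<ge> 1" for n :: nat
    using that by (simp add: of_nat_diff)
  have eqXS: "(\<lambda>\<omega>. X1 \<omega> * erw_sum X1 \<eta> n \<omega>) = (\<lambda>\<omega>. X1 \<omega> ^ 2 + (\<Sum>k\<in>{2..n}. X1 \<omega> ^ 2 * \<eta> k \<omega>))"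
    if "n \<ge> 1" for n
    unfolding eqS[OF that] by (intro ext) (simp add: sum_distrib_left power2_eq_square algebra_simps)
  have eqS2: "(\<lambda>\<omega>. (erw_sum X1 \<eta> n \<omega>)^2) = (\<lambda>\<omega>. X1 \<omega> ^ 2 + 2 * (\<Sum>k\<in>{2..n}. X1 \<omega> ^ 2 * \<eta> k \<omega>)
      + (\<Sum>j\<in>{2..n}. \<Sum>k\<in>{2..n}. X1 \<omega> ^ 2 * \<eta> j \<omega> * \<eta> k \<omega>))"
    if "n \<ge> 1" for n
  proof (intro ext)
    fix \<omega>
    define T where "T = (\<Sum>k\<in>{2..n}. \<eta> k \<omega>)"
    have 1: "(\<Sum>j\<in>{2..n}. \<Sum>k\<in>{2..n}. X1 \<omega> ^ 2 * \<eta> j \<omega> * \<eta> k \<omega>) = X1 \<omega> ^ 2 * (T * T)"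
    proof -
      have "T * T = (\<Sum>j\<in>{2..n}. \<Sum>k\<in>{2..n}. \<eta> j \<omega> * \<eta> k \<omega>)"
        unfolding T_def by (rule sum_product)
      then show ?thesis by (simp add: sum_distrib_left mult.assoc)
    qed
    have 2: "(\<Sum>k\<in>{2..n}. X1 \<omega> ^ 2 * \<eta> k \<omega>) = X1 \<omega> ^ 2 * T"
      unfolding T_def by (simp add: sum_distrib_left)
    have 3: "(\<Sum>k\<in>{2..n}. X1 \<omega> * \<eta> k \<omega>) = X1 \<omega> * T"
      unfolding T_def by (simp add: sum_distrib_left)
    show "(erw_sum X1 \<eta> n \<omega>)^2 = X1 \<omega> ^ 2 + 2 * (\<Sum>k\<in>{2..n}. X1 \<omega> ^ 2 * \<eta> k \<omega>)
      + (\<Sum>j\<in>{2..n}. \<Sum>k\<in>{2..n}. X1 \<omega> ^ 2 * \<eta> j \<omega> * \<eta> k \<omega>)"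
      unfolding 1 2 eqS[OF that] 3 by (simp add: power2_eq_square algebra_simps)
  qed
  have iS: "integrable M (erw_sum X1 \<eta> n)" if "n \<ge> 1" for n
    unfolding eqS[OF that] using iX iXe
    by (intro Bochner_Integration.integrable_add Bochner_Integration.integrable_sum) auto
  have ES: "expectation (erw_sum X1 \<eta> n) = (p - q) + (real n - 1) * (p - q)^2" if "n \<ge> 1" for n
  proof -
    have "expectation (erw_sum X1 \<eta> n) = expectation X1 + (\<Sum>k\<in>{2..n}. expectation (\<lambda>\<omega>. X1 \<omega> * \<eta> k \<omega>))"
      unfolding eqS[OF that] using iX iXe
      by (subst Bochner_Integration.integral_add)
         (auto intro!: Bochner_Integration.integrable_sum simp: Bochner_Integration.integral_sum)
    also have "\<dots> = (p - q) + (\<Sum>k\<in>{2..n}. (p - q)^2)"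
      using EX1 E_Xe by simp
    finally show ?thesis using cardK[OF that] by simp
  qed
  have iXS: "integrable M (\<lambda>\<omega>. X1 \<omega> * erw_sum X1 \<eta> n \<omega>)" if "n \<ge> 1" for n
    unfolding eqXS[OF that] using iX2 iX2e
    by (intro Bochner_Integration.integrable_add Bochner_Integration.integrable_sum) auto
  have EXS: "expectation (\<lambda>\<omega>. X1 \<omega> * erw_sum X1 \<eta> n \<omega>) = (p + q) + (real n - 1) * ((p + q) * (p - q))"
    if "n \<ge> 1" for n
  proof -
    have "expectation (\<lambda>\<omega>. X1 \<omega> * erw_sum X1 \<eta> n \<omega>) =
        expectation (\<lambda>\<omega>. X1 \<omega> ^ 2) + (\<Sum>k\<in>{2..n}. expectation (\<lambda>\<omega>. X1 \<omega> ^ 2 * \<eta> k \<omega>))"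
      unfolding eqXS[OF that] using iX2 iX2e
      by (subst Bochner_Integration.integral_add)
         (auto intro!: Bochner_Integration.integrable_sum simp: Bochner_Integration.integral_sum)
    also have "\<dots> = (p + q) + (\<Sum>k\<in>{2..n}. (p + q) * (p - q))"
      using EX2 E_X2e by simp
    finally show ?thesis using cardK[OF that] by simp
  qed
  have iSS: "integrable M (\<lambda>\<omega>. \<Sum>j\<in>{2..n}. \<Sum>k\<in>{2..n}. X1 \<omega> ^ 2 * \<eta> j \<omega> * \<eta> k \<omega>)" for n
    using iX2ee by (intro Bochner_Integration.integrable_sum) auto
  have iSk: "integrable M (\<lambda>\<omega>. \<Sum>k\<in>{2..n}. X1 \<omega> ^ 2 * \<eta> k \<omega>)" for n
    using iX2e by (intro Bochner_Integration.integrable_sum) auto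
  have iS2: "integrable M (\<lambda>\<omega>. (erw_sum X1 \<eta> n \<omega>)^2)" if "n \<ge> 1" for n
    unfolding eqS2[OF that] using iX2 iSk iSS
    by (intro Bochner_Integration.integrable_add Bochner_Integration.integrable_mult_right) auto
  have ES2: "expectation (\<lambda>\<omega>. (erw_sum X1 \<eta> n \<omega>)^2) = (p + q) + 2 * ((real n - 1) * ((p + q) * (p - q)))
     + (real n - 1) * ((p + q)^2 + (real n - 2) * ((p + q) * (p - q)^2))" if "n \<ge> 1" for n
  proof -
    have "expectation (\<lambda>\<omega>. (erw_sum X1 \<eta> n \<omega>)^2) = expectation (\<lambda>\<omega>. X1 \<omega> ^ 2)
        + 2 * (\<Sum>k\<in>{2..n}. expectation (\<lambda>\<omega>. X1 \<omega> ^ 2 * \<eta> k \<omega>))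
        + (\<Sum>j\<in>{2..n}. \<Sum>k\<in>{2..n}. expectation (\<lambda>\<omega>. X1 \<omega> ^ 2 * \<eta> j \<omega> * \<eta> k \<omega>))"
    proof -
      have inner: "integrable M (\<lambda>\<omega>. \<Sum>k\<in>{2..n}. X1 \<omega> ^ 2 * \<eta> j \<omega> * \<eta> k \<omega>)" if "j \<in> {2..n}" for j
        using iX2ee that by (intro Bochner_Integration.integrable_sum) auto
      have ds: "expectation (\<lambda>\<omega>. \<Sum>j\<in>{2..n}. \<Sum>k\<in>{2..n}. X1 \<omega> ^ 2 * \<eta> j \<omega> * \<eta> k \<omega>) =
          (\<Sum>j\<in>{2..n}. \<Sum>k\<in>{2..n}. expectation (\<lambda>\<omega>. X1 \<omega> ^ 2 * \<eta> j \<omega> * \<eta> k \<omega>))"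
        using inner iX2ee by (simp add: Bochner_Integration.integral_sum)
      show ?thesis
        unfolding eqS2[OF that] using iX2 iSk iSS iX2e ds
        by (simp add: Bochner_Integration.integral_add Bochner_Integration.integral_sum
          Bochner_Integration.integrable_add Bochner_Integration.integrable_sum)
    qed
    also have "\<dots> = (p + q) + 2 * (\<Sum>k\<in>{2..n}. (p + q) * (p - q))
        + (\<Sum>j\<in>{2..n}. \<Sum>k\<in>{2..n}. (if j = k then (p + q)^2 else (p + q) * (p - q)^2))"
      using EX2 E_X2e E_X2ee by simp
    also have "(\<Sum>j\<in>{2..n}. \<Sum>k\<in>{2..n}. (if j = k then (p + q)^2 else (p + q) * (p - q)^2))
        = (\<Sum>j\<in>{2..n}. (p + q)^2 + (real (card {2..n}) - 1) * ((p + q) * (p - q)^2))"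
      by (rule sum.cong) (auto simp: sum_if_eq)
    finally show ?thesis using cardK[OF that] by (simp add: algebra_simps)
  qed
  define d where "d = p - q"
  define s where "s = p + q"
  have lim1: "(\<lambda>n. expectation (\<lambda>\<omega>. erw_sum X1 \<eta> n \<omega> / real n)) \<longlonglongrightarrow> (p - q)^2"
  proof (rule lim_quad[where b = "(p - q) - (p - q)^2" and c = 0])
    show "\<forall>\<^sub>F n in sequentially. expectation (\<lambda>\<omega>. erw_sum X1 \<eta> n \<omega> / real n) =
       ((p - q)^2 * real n ^ 2 + ((p - q) - (p - q)^2) * real n + 0) / real n ^ 2"
      using eventually_ge_at_top[of "1::nat"]
    proof eventually_elim
      case (elim n)
      then show ?case by (simp add: ES field_simps power2_eq_square)
    qed
  qed
  have limXS: "(\<lambda>n. expectation (\<lambda>\<omega>. X1 \<omega> * erw_sum X1 \<eta> n \<omega>) / real n) \<longlonglongrightarrow> s * d"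
  proof (rule lim_quad[where b = "s - s * d" and c = 0])
    show "\<forall>\<^sub>F n in sequentially. expectation (\<lambda>\<omega>. X1 \<omega> * erw_sum X1 \<eta> n \<omega>) / real n =
       (s * d * real n ^ 2 + (s - s * d) * real n + 0) / real n ^ 2"
      using eventually_ge_at_top[of "1::nat"]
    proof eventually_elim
      case (elim n)
      then show ?case by (simp add: EXS s_def d_def field_simps power2_eq_square)
    qed
  qed
  have limS2: "(\<lambda>n. expectation (\<lambda>\<omega>. (erw_sum X1 \<eta> n \<omega>)^2) / real n ^ 2) \<longlonglongrightarrow> s * d^2"
  proof (rule lim_quad[where b = "2 * s * d + s ^ 2 - 3 * s * d ^ 2" and c = "s - 2 * s * d - s ^ 2 + 2 * s * d ^ 2"])
    show "\<forall>\<^sub>F n in sequentially. expectation (\<lambda>\<omega>. (erw_sum X1 \<eta> n \<omega>)^2) / real n ^ 2 =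
       (s * d^2 * real n ^ 2 + (2 * s * d + s ^ 2 - 3 * s * d ^ 2) * real n + (s - 2 * s * d - s ^ 2 + 2 * s * d ^ 2)) / real n ^ 2"
      using eventually_ge_at_top[of "1::nat"]
    proof eventually_elim
      case (elim n)
      then show ?case unfolding ES2[OF elim] by (simp add: s_def d_def field_simps power2_eq_square)
    qed
  qed
  have varEq: "variance (\<lambda>\<omega>. erw_sum X1 \<eta> n \<omega> / real n) =
      expectation (\<lambda>\<omega>. (erw_sum X1 \<eta> n \<omega>)^2) / real n ^ 2 - (expectation (\<lambda>\<omega>. erw_sum X1 \<eta> n \<omega> / real n))^2"
    if "n \<ge> 1" for n
  proof -
    have "variance (\<lambda>\<omega>. erw_sum X1 \<eta> n \<omega> / real n) =
      expectation (\<lambda>\<omega>. (erw_sum X1 \<eta> n \<omega> / real n)^2) - (expectation (\<lambda>\<omega>. erw_sum X1 \<eta> n \<omega> / real n))^2"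
      using iS[OF that] iS2[OF that]
      by (intro variance_eq) (auto intro!: Bochner_Integration.integrable_divide_zero simp: power_divide)
    then show ?thesis by (simp add: power_divide)
  qed
  have lim2: "(\<lambda>n. variance (\<lambda>\<omega>. erw_sum X1 \<eta> n \<omega> / real n)) \<longlonglongrightarrow> (p - q)^2 * (p + q - (p - q)^2)"
  proof -
    have t: "(\<lambda>n. expectation (\<lambda>\<omega>. (erw_sum X1 \<eta> n \<omega>)^2) / real n ^ 2 - (expectation (\<lambda>\<omega>. erw_sum X1 \<eta> n \<omega> / real n))^2)
       \<longlonglongrightarrow> s * d^2 - ((p - q)^2)^2"
      by (intro tendsto_diff tendsto_power limS2 lim1)
    have e: "s * d^2 - ((p - q)^2)^2 = (p - q)^2 * (p + q - (p - q)^2)"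
      by (simp add: s_def d_def power2_eq_square algebra_simps)
    have ev: "\<forall>\<^sub>F n in sequentially. expectation (\<lambda>\<omega>. (erw_sum X1 \<eta> n \<omega>)^2) / real n ^ 2 - (expectation (\<lambda>\<omega>. erw_sum X1 \<eta> n \<omega> / real n))^2
       = variance (\<lambda>\<omega>. erw_sum X1 \<eta> n \<omega> / real n)"
      using eventually_ge_at_top[of "1::nat"] by eventually_elim (rule varEq[symmetric])
    show ?thesis using Lim_transform_eventually[OF t[unfolded e] ev] .
  qed
  note mS[measurable] mX[measurable]
  define D where "D n \<omega> = erw_sum X1 \<eta> n \<omega> / real n - d * X1 \<omega>" for n \<omega>
  have mD[measurable]: "D n \<in> borel_measurable M" for n
    unfolding D_def[abs_def] by measurable
  have eqD2: "(\<lambda>\<omega>. (D n \<omega>)^2) = (\<lambda>\<omega>. (erw_sum X1 \<eta> n \<omega>)^2 / real n ^ 2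
      - 2 * d * (X1 \<omega> * erw_sum X1 \<eta> n \<omega> / real n) + d^2 * X1 \<omega> ^ 2)" if "n \<ge> 1" for n
    using that unfolding D_def by (intro ext) (simp add: power2_eq_square field_simps)
  have iD2: "integrable M (\<lambda>\<omega>. (D n \<omega>)^2)" if "n \<ge> 1" for n
    unfolding eqD2[OF that] using iS2[OF that] iXS[OF that] iX2
    by (intro Bochner_Integration.integrable_add Bochner_Integration.integrable_diff
        Bochner_Integration.integrable_divide_zero Bochner_Integration.integrable_mult_right) auto
  have ED2: "expectation (\<lambda>\<omega>. (D n \<omega>)^2) = expectation (\<lambda>\<omega>. (erw_sum X1 \<eta> n \<omega>)^2) / real n ^ 2
      - 2 * d * (expectation (\<lambda>\<omega>. X1 \<omega> * erw_sum X1 \<eta> n \<omega>) / real n) + d^2 * (p + q)" if "n \<ge> 1" for n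
    unfolding eqD2[OF that] using iS2[OF that] iXS[OF that] iX2 EX2
    by (simp add: Bochner_Integration.integral_add Bochner_Integration.integral_diff
        Bochner_Integration.integrable_add Bochner_Integration.integrable_diff
        Bochner_Integration.integrable_divide_zero Bochner_Integration.integrable_mult_right)
  have limD: "(\<lambda>n. expectation (\<lambda>\<omega>. (D n \<omega>)^2)) \<longlonglongrightarrow> 0"
  proof -
    have t: "(\<lambda>n. expectation (\<lambda>\<omega>. (erw_sum X1 \<eta> n \<omega>)^2) / real n ^ 2
      - 2 * d * (expectation (\<lambda>\<omega>. X1 \<omega> * erw_sum X1 \<eta> n \<omega>) / real n) + d^2 * (p + q))
      \<longlonglongrightarrow> s * d^2 - 2 * d * (s * d) + d^2 * (p + q)"
      by (intro tendsto_add tendsto_diff tendsto_mult tendsto_const limS2 limXS)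
    have e: "s * d^2 - 2 * d * (s * d) + d^2 * (p + q) = 0"
      by (simp add: s_def power2_eq_square algebra_simps)
    have ev: "\<forall>\<^sub>F n in sequentially. expectation (\<lambda>\<omega>. (erw_sum X1 \<eta> n \<omega>)^2) / real n ^ 2
      - 2 * d * (expectation (\<lambda>\<omega>. X1 \<omega> * erw_sum X1 \<eta> n \<omega>) / real n) + d^2 * (p + q)
      = expectation (\<lambda>\<omega>. (D n \<omega>)^2)"
      using eventually_ge_at_top[of "1::nat"] by eventually_elim (rule ED2[symmetric])
    show ?thesis using Lim_transform_eventually[OF t[unfolded e] ev] .
  qed
  have wc: "weak_conv_m (\<lambda>n. distr M borel (\<lambda>\<omega>. erw_sum X1 \<eta> n \<omega> / real n)) (erw_limit_law p q r)"
    unfolding weak_conv_m_def weak_conv_def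
  proof (intro allI impI)
    fix x assume cont: "isCont (cdf (erw_limit_law p q r)) x"
    have wf: "pmf_of_list_wf [(p - q, p), (0, r), (-(p - q), q)]"
      using assms(2-5) by (auto simp: pmf_of_list_wf_def)
    have measL: "measure (erw_limit_law p q r) A =
        (if d \<in> A then p else 0) + (if 0 \<in> A then r else 0) + (if -d \<in> A then q else 0)"
      if "A \<in> sets borel" for A
    proof -
      have "measure (erw_limit_law p q r) A =
          measure_pmf.prob (pmf_of_list [(p - q, p), (0, r), (-(p - q), q)]) A"
        unfolding erw_limit_law_def using that by (simp add: measure_distr)
      also have "\<dots> = sum_list (map snd (filter (\<lambda>x. fst x \<in> A) [(p - q, p), (0, r), (-(p - q), q)]))"
        by (rule measure_pmf_of_list[OF wf])
      finally show ?thesis by (simp add: d_def)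
    qed
    have rd: "real_distribution (erw_limit_law p q r)"
      unfolding erw_limit_law_def by (rule prob_space.real_distribution_distr[OF prob_space_measure_pmf]) simp
    have "measure (erw_limit_law p q r) {x} = 0"
      using cont finite_borel_measure.isCont_cdf[OF real_distribution.finite_borel_measure_M[OF rd]]
      by simp
    then have xn: "x \<noteq> d" "x \<noteq> 0" "x \<noteq> -d"
      using measL[of "{x}"] assms(2-4) by (auto split: if_splits)
    define F where "F = (if d \<le> x then p else 0) + (if 0 \<le> x then r else 0) + (if -d \<le> x then q else 0)"
    have cdfL: "cdf (erw_limit_law p q r) x = F"
      unfolding cdf_def2 F_def by (simp add: measL)
    have cdfn: "cdf (distr M borel (\<lambda>\<omega>. erw_sum X1 \<eta> n \<omega> / real n)) x =
        prob {\<omega>\<in>space M. erw_sum X1 \<eta> n \<omega> / real n \<le> x}" for n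
    proof -
      have "cdf (distr M borel (\<lambda>\<omega>. erw_sum X1 \<eta> n \<omega> / real n)) x =
          prob ((\<lambda>\<omega>. erw_sum X1 \<eta> n \<omega> / real n) -` {..x} \<inter> space M)"
        unfolding cdf_def2 by (rule measure_distr) auto
      also have "(\<lambda>\<omega>. erw_sum X1 \<eta> n \<omega> / real n) -` {..x} \<inter> space M =
          {\<omega>\<in>space M. erw_sum X1 \<eta> n \<omega> / real n \<le> x}" by auto
      finally show ?thesis .
    qed
    have PZ: "prob {\<omega>\<in>space M. d * X1 \<omega> \<le> x} = F"
    proof -
      let ?Z = "{\<omega>\<in>space M. d * X1 \<omega> \<le> x}"
      have "?Z \<in> events" by measurable
      note sp = prob_split3[OF mX aeX this]
      have a: "?Z \<inter> {\<omega>\<in>space M. X1 \<omega> = 1} = (if d \<le> x then {\<omega>\<in>space M. X1 \<omega> = 1} else {})" by auto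
      have b: "?Z \<inter> {\<omega>\<in>space M. X1 \<omega> = -1} = (if -d \<le> x then {\<omega>\<in>space M. X1 \<omega> = -1} else {})" by auto
      have c: "?Z \<inter> {\<omega>\<in>space M. X1 \<omega> = 0} = (if 0 \<le> x then {\<omega>\<in>space M. X1 \<omega> = 0} else {})" by auto
      show ?thesis unfolding sp a b c F_def using assms(7,8,9) by simp
    qed
    define \<delta> where "\<delta> = min \<bar>x - d\<bar> (min \<bar>x\<bar> \<bar>x + d\<bar>)"
    have dpos: "\<delta> > 0" using xn by (auto simp: \<delta>_def)
    have gap: "\<delta> \<le> \<bar>d * X1 \<omega> - x\<bar>" if "X1 \<omega> = 1 \<or> X1 \<omega> = -1 \<or> X1 \<omega> = 0" for \<omega>
      using that by (auto simp: \<delta>_def abs_minus_commute)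
    define B where "B n = {\<omega>\<in>space M. \<delta>^2 \<le> (D n \<omega>)^2}" for n
    have Bev: "B n \<in> events" for n unfolding B_def by measurable
    have PB: "prob (B n) \<le> expectation (\<lambda>\<omega>. (D n \<omega>)^2) / \<delta>^2" if "n \<ge> 1" for n
      unfolding B_def by (rule integral_Markov_inequality_measure[OF iD2[OF that] sets.top]) (use dpos in auto)
    have sq: "\<delta>^2 \<le> y^2" if "\<delta> \<le> \<bar>y\<bar>" for y
      using power_mono[OF that less_imp_le[OF dpos], of 2] by simp
    have key: "\<bar>prob {\<omega>\<in>space M. erw_sum X1 \<eta> n \<omega> / real n \<le> x} - F\<bar> \<le> prob (B n)" for n
    proof -
      let ?An = "{\<omega>\<in>space M. erw_sum X1 \<eta> n \<omega> / real n \<le> x}" and ?Z = "{\<omega>\<in>space M. d * X1 \<omega> \<le> x}"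
      have mA: "(\<lambda>\<omega>. erw_sum X1 \<eta> n \<omega> / real n) \<in> borel_measurable M"
        using mS[of n] by (intro borel_measurable_divide) auto
      have mZ: "(\<lambda>\<omega>. d * X1 \<omega>) \<in> borel_measurable M"
        using mX by (intro borel_measurable_times) auto
      have evs: "?An \<in> events" "?Z \<in> events" using ev_le[OF mA] ev_le[OF mZ] by auto
      have "prob ?An \<le> prob (?Z \<union> B n)"
      proof (rule finite_measure_mono_AE)
        show "AE \<omega>\<in>?An in M. \<omega> \<in> ?Z \<union> B n"
          using aeX
        proof eventually_elim
          case (elim \<omega>)
          show ?case
          proof
            assume w: "\<omega> \<in> ?An"
            have g: "\<delta> \<le> \<bar>d * X1 \<omega> - x\<bar>" using gap elim by blast
            show "\<omega> \<in> ?Z \<union> B n"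
            proof (cases "d * X1 \<omega> \<le> x")
              case True then show ?thesis using w by auto
            next
              case False
              have "\<delta> \<le> \<bar>D n \<omega>\<bar>" unfolding D_def
                by (rule gap_aux1[OF g _ False]) (use w in simp)
              then have "\<delta>^2 \<le> (D n \<omega>)^2" by (rule sq)
              then show ?thesis using w by (simp add: B_def)
            qed
          qed
        qed
        show "?Z \<union> B n \<in> events" using evs Bev by auto
      qed
      also have "\<dots> \<le> prob ?Z + prob (B n)" by (rule measure_Un_le) (use evs Bev in auto)
      finally have 1: "prob ?An \<le> F + prob (B n)" using PZ by simp
      have "prob ?Z \<le> prob (?An \<union> B n)"
      proof (rule finite_measure_mono_AE)
        show "AE \<omega>\<in>?Z in M. \<omega> \<in> ?An \<union> B n"
          using aeX
        proof eventually_elim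
          case (elim \<omega>)
          show ?case
          proof
            assume w: "\<omega> \<in> ?Z"
            have g: "\<delta> \<le> \<bar>d * X1 \<omega> - x\<bar>" using gap elim by blast
            show "\<omega> \<in> ?An \<union> B n"
            proof (cases "erw_sum X1 \<eta> n \<omega> / real n \<le> x")
              case True then show ?thesis using w by auto
            next
              case False
              have "\<delta> \<le> \<bar>D n \<omega>\<bar>" unfolding D_def
                by (rule gap_aux2[OF g _ False]) (use w in simp)
              then have "\<delta>^2 \<le> (D n \<omega>)^2" by (rule sq)
              then show ?thesis using w by (simp add: B_def)
            qed
          qed
        qed
        show "?An \<union> B n \<in> events" using evs Bev by auto
      qed
      also have "\<dots> \<le> prob ?An + prob (B n)" by (rule measure_Un_le) (use evs Bev in auto)
      finally have 2: "F \<le> prob ?An + prob (B n)" using PZ by simp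
      from 1 2 show ?thesis by (simp add: abs_le_iff)
    qed
    have "(\<lambda>n. prob {\<omega>\<in>space M. erw_sum X1 \<eta> n \<omega> / real n \<le> x} - F) \<longlonglongrightarrow> 0"
    proof (rule Lim_null_comparison)
      show "\<forall>\<^sub>F n in sequentially. norm (prob {\<omega>\<in>space M. erw_sum X1 \<eta> n \<omega> / real n \<le> x} - F)
          \<le> expectation (\<lambda>\<omega>. (D n \<omega>)^2) / \<delta>^2"
        using eventually_ge_at_top[of "1::nat"]
      proof eventually_elim
        case (elim n)
        show ?case using key[of n] PB[OF elim] by simp
      qed
      show "(\<lambda>n. expectation (\<lambda>\<omega>. (D n \<omega>)^2) / \<delta>^2) \<longlonglongrightarrow> 0"
        by (rule tendsto_divide_zero[OF limD])
    qed
    then have "(\<lambda>n. (prob {\<omega>\<in>space M. erw_sum X1 \<eta> n \<omega> / real n \<le> x} - F) + F) \<longlonglongrightarrow> 0 + F"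
      by (rule tendsto_add) simp
    then show "(\<lambda>n. cdf (distr M borel (\<lambda>\<omega>. erw_sum X1 \<eta> n \<omega> / real n)) x) \<longlonglongrightarrow> cdf (erw_limit_law p q r) x"
      by (simp add: cdfn cdfL)
  qed
  show ?thesis using wc lim1 lim2 by blast
qed

end
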